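(* Let $\Omega\subseteq\mathbb{R}^n$ be open and convex, let $f:\Omega\to\mathbb{R}$ be convex and differentiable with $\nabla f$ Lipschitz continuous with constant $L$ (extend $f$ by $+\infty$ outside $\Omega$), let $g:\mathbb{R}^n\to\mathbb{R}\cup\{+\infty\}$ be convex with closed sublevel sets, and let $h=f+g$ have compact sublevel sets and $h^\star=\inf_x h(x)<\infty$. Run the oracle-structured minimization method (described in the context) from $x^0\in\Omega$, with parameters satisfying $\mu_{\max}\tau_{\min}>2L/(1-\alpha)$. Then for every $k_0$ there exists $k\ge k_0$ with $t_k=1$; that is, undamped steps occur infinitely often.
   Context: Oracle-structured minimization method (OSMM). Fixed parameters: memory $M\ge1$ (integer), $\alpha,\beta\in(0,1)$, $\tau_{\min}>0$, $0<\mu_{\min}\le\mu_{\max}$, $\gamma_{\rm dec}\in(0,1)$, $\gamma_{\rm inc}>1$, and an initial $\mu_0\in[\mu_{\min},\mu_{\max}]$. There is a constant $C$ and, for each $k$, a symmetric positive semidefinite matrix $H_k$ with $\|H_k\|_2\le C$ (otherwise arbitrary). For $k=0,1,2,\dots$: (1) $l_k(x)=\max_{i=\max\{0,k-M+1\},\dots,k}\big(f(x^i)+\nabla f(x^i)^T(x-x^i)\big)$; $\tau_k=\operatorname{Tr}(H_k)/n$; $\lambda_k=\mu_k(\tau_k+\tau_{\min})$. (2) $x^{k+1/2}=\operatorname*{argmin}_x\big(l_k(x)+g(x)+\tfrac12(x-x^k)^T(H_k+\lambda_kI)(x-x^k)\big)$, $v^k=x^{k+1/2}-x^k$. (3) With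 $\phi_k(t)=f(x^k+tv^k)+t\,g(x^{k+1/2})+(1-t)g(x^k)$ for $t\in[0,1]$, let $t_k=\beta^j$ where $j$ is the smallest nonnegative integer with $\phi_k(t_k)\le h(x^k)-\frac{\alpha t_k}{2}(v^k)^T(H_k+\lambda_kI)v^k$; set $x^{k+1}=x^k+t_kv^k$. (4) $\mu_{k+1}=\max\{\gamma_{\rm dec}\mu_k,\mu_{\min}\}$ if $t_k=1$, and $\mu_{k+1}=\min\{\gamma_{\rm inc}\mu_k,\mu_{\max}\}$ if $t_k<1$. *)

theory Defs
  imports "HOL-Analysis.Analysis"
begin

definition ereal_convex :: "('a::real_vector \<Rightarrow> ereal) \<Rightarrow> bool" where
  "ereal_convex g \<longleftrightarrow>
     (\<forall>x y. \<forall>t::real. 0 \<le> t \<and> t \<le> 1 \<longrightarrow>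
        g ((1 - t) *\<^sub>R x + t *\<^sub>R y) \<le> ereal (1 - t) * g x + ereal t * g y)"

definition ext_inf :: "'a set \<Rightarrow> ('a \<Rightarrow> real) \<Rightarrow> 'a \<Rightarrow> ereal" where
  "ext_inf \<Omega> f x = (if x \<in> \<Omega> then ereal (f x) else \<infinity>)"

definition osmm_l :: "nat \<Rightarrow> ('a::real_inner \<Rightarrow> real) \<Rightarrow> ('a \<Rightarrow> 'a) \<Rightarrow> (nat \<Rightarrow> 'a) \<Rightarrow> nat \<Rightarrow> 'a \<Rightarrow> real" where
  "osmm_l M f gradf xs k x = Max ((\<lambda>i. f (xs i) + gradf (xs i) \<bullet> (x - xs i)) ` {(k + 1) - M .. k})"

definition osmm_tau :: "real^'n^'n \<Rightarrow> real" where
  "osmm_tau H = trace H / real CARD('n)"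

definition osmm_quad :: "real^'n^'n \<Rightarrow> real \<Rightarrow> real^'n \<Rightarrow> real" where
  "osmm_quad H lam d = (1/2) * (d \<bullet> ((H + lam *\<^sub>R mat 1) *v d))"

end

theory Submission
  imports Defs
begin

lemma grad_ineq:
  fixes f :: "'a::real_inner \<Rightarrow> real"
  assumes "open \<Omega>" "convex \<Omega>" "convex_on \<Omega> f" "x\<in>\<Omega>" "y\<in>\<Omega>"
    "(f has_derivative (\<lambda>d. gx \<bullet> d)) (at x)"
  shows "f x + gx \<bullet> (y - x) \<le> f y"
proof -
  define p where "p s = x + s *\<^sub>R (y - x)" for s::real
  define A where "A = p -` \<Omega>"
  have contp: "continuous_on UNIV p" unfolding p_def by (intro continuous_intros)
  have oA: "open A" unfolding A_def using open_vimage[OF assms(1) contp] .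
  have pc: "p ((1 - t) *\<^sub>R u + t *\<^sub>R v) = (1 - t) *\<^sub>R p u + t *\<^sub>R p v" for t u v
    unfolding p_def by (simp add: algebra_simps)
  have cA: "convex A" unfolding convex_alt A_def
    using pc assms(2) by (auto simp: convex_alt)
  have cf: "convex_on A (f \<circ> p)"
  proof (rule convex_onI[OF _ cA])
    fix t u v :: real assume "0 < t" "t < 1" "u \<in> A" "v \<in> A"
    then show "(f \<circ> p) ((1 - t) *\<^sub>R u + t *\<^sub>R v) \<le> (1 - t) * (f \<circ> p) u + t * (f \<circ> p) v"
      using pc convex_onD[OF assms(3), of t "p u" "p v"] by (simp add: A_def)
  qed
  have dp: "(p has_derivative (\<lambda>s. s *\<^sub>R (y - x))) (at 0 within A)"
    unfolding p_def by (auto intro!: derivative_eq_intros)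
  have "p 0 = x" by (simp add: p_def)
  then have df: "(f has_derivative (\<lambda>d. gx \<bullet> d)) (at (p 0) within p ` A)"
    using assms(6) has_derivative_at_withinI by auto
  have "((f \<circ> p) has_derivative (\<lambda>s. gx \<bullet> (s *\<^sub>R (y - x)))) (at 0 within A)"
    using diff_chain_within[OF dp df] by (simp add: o_def)
  moreover have "(\<lambda>s. gx \<bullet> (s *\<^sub>R (y - x))) = (*) (gx \<bullet> (y - x))"
    by (auto simp: mult.commute)
  ultimately have "((f \<circ> p) has_field_derivative (gx \<bullet> (y - x))) (at 0 within A)"
    by (simp add: has_field_derivative_def)
  moreover have "0 \<in> interior A" "1 \<in> A"
    using oA assms(4,5) by (auto simp: A_def p_def interior_open)
  ultimately have "(f \<circ> p) 1 - (f \<circ> p) 0 \<ge> (gx \<bullet> (y - x)) * (1 - 0)"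
    using convex_on_imp_above_tangent[OF cf convex_connected[OF cA]] by blast
  then show ?thesis by (simp add: p_def)
qed
lemma fbound:
  fixes f :: "'a::real_inner \<Rightarrow> real"
  assumes "open \<Omega>" "convex \<Omega>" "convex_on \<Omega> f" "x\<in>\<Omega>" "z\<in>\<Omega>"
    and fg: "\<forall>y\<in>\<Omega>. (f has_derivative (\<lambda>d. gradf y \<bullet> d)) (at y)"
    and fl: "\<forall>y\<in>\<Omega>. \<forall>z\<in>\<Omega>. norm (gradf y - gradf z) \<le> L * norm (y - z)"
  shows "f z \<le> f x + gradf x \<bullet> (z - x) + L * (norm (z - x))^2"
proof -
  have "f z + gradf z \<bullet> (x - z) \<le> f x"
    using grad_ineq[OF assms(1-3,5,4)] fg assms(5) by blast
  moreover have "(gradf z - gradf x) \<bullet> (z - x) \<le> norm (gradf z - gradf x) * norm (z - x)"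
    by (rule norm_cauchy_schwarz)
  moreover have "norm (gradf z - gradf x) * norm (z - x) \<le> L * norm (z - x) * norm (z - x)"
    using fl assms(4,5) by (simp add: mult_right_mono)
  moreover have "gradf z \<bullet> (x - z) = - (gradf x \<bullet> (z - x)) - (gradf z - gradf x) \<bullet> (z - x)"
    by (simp add: algebra_simps inner_diff_right inner_diff_left)
  ultimately show ?thesis by (simp add: power2_eq_square)
qed
lemma dom_sub:
  fixes f :: "'a::real_inner \<Rightarrow> real" and g :: "'a \<Rightarrow> ereal"
  assumes "open \<Omega>" "convex \<Omega>" "convex_on \<Omega> f"
    and fg: "\<forall>y\<in>\<Omega>. (f has_derivative (\<lambda>d. gradf y \<bullet> d)) (at y)"
    and fl: "\<forall>y\<in>\<Omega>. \<forall>z\<in>\<Omega>. norm (gradf y - gradf z) \<le> L * norm (y - z)"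
    and gp: "\<forall>y. g y \<noteq> -\<infinity>"
    and gc: "ereal_convex g"
    and hc: "\<forall>c::real. compact {y. ext_inf \<Omega> f y + g y \<le> ereal c}"
    and y: "y \<in> \<Omega>" "g y \<noteq> \<infinity>"
    and w: "g w \<noteq> \<infinity>"
  shows "w \<in> \<Omega>"
proof (rule ccontr)
  assume wn: "w \<notin> \<Omega>"
  define p where "p s = y + s *\<^sub>R (w - y)" for s::real
  have contp: "continuous_on A p" for A unfolding p_def by (intro continuous_intros)
  define T where "T = {0..1::real} \<inter> p -` (- \<Omega>)"
  have "closed T" unfolding T_def
    using continuous_closed_preimage[OF contp closed_atLeastAtMost] assms(1) by (simp add: closed_Compl)
  then have "compact T" unfolding T_def
    by (metis T_def compact_Int_closed compact_Icc inf.idem inf_assoc)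
  moreover have "1 \<in> T" using wn by (simp add: T_def p_def)
  ultimately obtain s0 where s0: "s0 \<in> T" "\<And>s. s \<in> T \<Longrightarrow> s0 \<le> s"
    using compact_attains_inf[of T] by blast
  have "s0 \<noteq> 0" using s0(1) y by (auto simp: T_def p_def)
  with s0 have s0p: "0 < s0" "s0 \<le> 1" by (auto simp: T_def)
  have inO: "p s \<in> \<Omega>" if "0 \<le> s" "s < s0" for s
    using s0(2)[of s] that s0p by (auto simp: T_def)
  obtain Gy where Gy: "g y = ereal Gy" using y gp by (cases "g y") auto
  obtain Gw where Gw: "g w = ereal Gw" using w gp by (cases "g w") auto
  define c where "c = f y + norm (gradf y) * norm (w - y) + max L 0 * (norm (w - y))^2 + \<bar>Gy\<bar> + \<bar>Gw\<bar>"
  have hb: "ext_inf \<Omega> f (p s) + g (p s) \<le> ereal c" if s: "0 \<le> s" "s < s0" for s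
  proof -
    have ps: "p s \<in> \<Omega>" using inO s .
    have d: "p s - y = s *\<^sub>R (w - y)" by (simp add: p_def)
    have f1: "f (p s) \<le> f y + gradf y \<bullet> (p s - y) + L * (norm (p s - y))^2"
      using fbound[OF assms(1-3) y(1) ps fg fl] .
    have "gradf y \<bullet> (p s - y) \<le> norm (gradf y) * norm (p s - y)"
      by (rule norm_cauchy_schwarz)
    also have "\<dots> \<le> norm (gradf y) * norm (w - y)"
      using s s0p by (simp add: d mult_left_mono mult_left_le_one_le)
    finally have f2: "gradf y \<bullet> (p s - y) \<le> norm (gradf y) * norm (w - y)" .
    have "L * (norm (p s - y))^2 = L * s^2 * (norm (w - y))^2"
      using s by (simp add: d power_mult_distrib)
    also have "\<dots> \<le> max L 0 * (norm (w - y))^2"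
    proof -
      have "s^2 \<le> 1" using s s0p by (simp add: power_le_one)
      then have "L * s^2 \<le> max L 0"
      proof (cases "L \<ge> 0")
        case True
        have "L * s^2 \<le> L * 1" using \<open>s^2 \<le> 1\<close> True by (rule mult_left_mono)
        then show ?thesis by simp
      next
        case False
        have "L * s^2 \<le> 0" using False by (simp add: mult_nonpos_nonneg)
        then show ?thesis by simp
      qed
      then show ?thesis by (simp add: mult_right_mono)
    qed
    finally have f3: "L * (norm (p s - y))^2 \<le> max L 0 * (norm (w - y))^2" .
    have "g (p s) \<le> ereal (1 - s) * g y + ereal s * g w"
    proof -
      have "(1 - s) *\<^sub>R y + s *\<^sub>R w = p s" by (simp add: p_def algebra_simps)
      moreover have "s \<le> 1" using s s0p by simp
      then have "g ((1 - s) *\<^sub>R y + s *\<^sub>R w) \<le> ereal (1 - s) * g y + ereal s * g w"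
        using gc[unfolded ereal_convex_def, rule_format, of s y w] s by blast
      ultimately show ?thesis by simp
    qed
    also have "\<dots> = ereal ((1 - s) * Gy + s * Gw)" by (simp add: Gy Gw)
    also have "\<dots> \<le> ereal (\<bar>Gy\<bar> + \<bar>Gw\<bar>)"
    proof -
      have s1: "0 \<le> 1 - s" "1 - s \<le> 1" "s \<le> 1" using s s0p by auto
      have "(1 - s) * Gy \<le> (1 - s) * \<bar>Gy\<bar>" using s1 by (intro mult_left_mono) auto
      also have "\<dots> \<le> \<bar>Gy\<bar>" using s1 by (intro mult_left_le_one_le) auto
      finally have "(1 - s) * Gy \<le> \<bar>Gy\<bar>" .
      moreover have "s * Gw \<le> s * \<bar>Gw\<bar>" using s by (intro mult_left_mono) auto
      moreover have "s * \<bar>Gw\<bar> \<le> \<bar>Gw\<bar>" using s1 s by (intro mult_left_le_one_le) auto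
      ultimately show ?thesis by simp
    qed
    finally have g1: "g (p s) \<le> ereal (\<bar>Gy\<bar> + \<bar>Gw\<bar>)" .
    have "ext_inf \<Omega> f (p s) + g (p s) \<le> ereal (f (p s)) + ereal (\<bar>Gy\<bar> + \<bar>Gw\<bar>)"
      using ps add_left_mono[OF g1, of "ereal (f (p s))"] by (simp add: ext_inf_def del: plus_ereal.simps)
    also have "\<dots> \<le> ereal c" using f1 f2 f3 by (simp add: c_def)
    finally show ?thesis .
  qed
  define P where "P = {0..s0} \<inter> p -` {z. ext_inf \<Omega> f z + g z \<le> ereal c}"
  have "closed P" unfolding P_def
    using continuous_closed_preimage[OF contp closed_atLeastAtMost compact_imp_closed[OF hc[rule_format, of c]]] .
  moreover have "{0..<s0} \<subseteq> P" using hb by (auto simp: P_def)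
  ultimately have "closure {0..<s0} \<subseteq> P" by (rule closure_minimal[rotated])
  then have "s0 \<in> P" using s0p by (auto simp: closure_atLeastLessThan)
  then have "ext_inf \<Omega> f (p s0) + g (p s0) \<le> ereal c" by (simp add: P_def)
  moreover have "p s0 \<notin> \<Omega>" using s0(1) by (simp add: T_def)
  ultimately show False using gp[rule_format, of "p s0"] unfolding ext_inf_def by auto
qed

lemma quad_lb:
  fixes Hm :: "real^'n^'n"
  assumes "\<forall>v. 0 \<le> v \<bullet> (Hm *v v)"
  shows "lam / 2 * (norm d)^2 \<le> osmm_quad Hm lam d"
proof -
  have "(Hm + lam *\<^sub>R mat 1) *v d = Hm *v d + lam *\<^sub>R d"
  proof -
    have "(lam *\<^sub>R mat 1) *v d = lam *\<^sub>R d"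
      by (metis matrix_vector_mul_lid scaleR_matrix_vector_assoc)
    then show ?thesis by (simp add: matrix_vector_mult_add_rdistrib)
  qed
  then have "osmm_quad Hm lam d = 1/2 * (d \<bullet> (Hm *v d)) + lam/2 * (d \<bullet> d)"
    by (simp add: osmm_quad_def inner_add_right algebra_simps)
  then show ?thesis using assms by (simp add: power2_norm_eq_inner)
qed
lemma quad0: "osmm_quad Hm lam 0 = 0" by (simp add: osmm_quad_def)
lemma tau_nonneg:
  fixes Hm :: "real^'n^'n"
  assumes "\<forall>v. 0 \<le> v \<bullet> (Hm *v v)"
  shows "0 \<le> osmm_tau Hm"
proof -
  have "Hm $ i $ i = axis i 1 \<bullet> (Hm *v axis i 1)" for i
    by (metis cart_eq_inner_axis inner_commute matrix_vector_mult_basis column_def vec_lambda_beta)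
  then have "0 \<le> Hm $ i $ i" for i using assms by metis
  then have "0 \<le> trace Hm" unfolding trace_def by (simp add: sum_nonneg)
  then show ?thesis by (simp add: osmm_tau_def)
qed


theorem mainTheorem4:
  fixes \<Omega> :: "(real^'n) set"
    and f :: "real^'n \<Rightarrow> real" and gradf :: "real^'n \<Rightarrow> real^'n"
    and g :: "real^'n \<Rightarrow> ereal"
    and L C \<alpha> \<beta> \<tau>min \<mu>min \<mu>max \<gamma>dec \<gamma>inc :: real
    and M :: nat
    and x xh :: "nat \<Rightarrow> real^'n" and H :: "nat \<Rightarrow> real^'n^'n"
    and \<mu> t :: "nat \<Rightarrow> real" and j :: "nat \<Rightarrow> nat"
  defines "h \<equiv> (\<lambda>y. ext_inf \<Omega> f y + g y)"
  assumes \<Omega>: "open \<Omega>" "convex \<Omega>"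
    and f_convex: "convex_on \<Omega> f"
    and f_grad: "\<forall>y\<in>\<Omega>. (f has_derivative (\<lambda>d. gradf y \<bullet> d)) (at y)"
    and f_lip: "\<forall>y\<in>\<Omega>. \<forall>z\<in>\<Omega>. norm (gradf y - gradf z) \<le> L * norm (y - z)"
    and g_proper: "\<forall>y. g y \<noteq> -\<infinity>"
    and g_convex: "ereal_convex g"
    and g_closed: "\<forall>c::real. closed {y. g y \<le> ereal c}"
    and h_compact: "\<forall>c::real. compact {y. h y \<le> ereal c}"
    and h_finite: "(INF y. h y) < \<infinity>"
    and params: "M \<ge> 1" "0 < \<alpha>" "\<alpha> < 1" "0 < \<beta>" "\<beta> < 1" "\<tau>min > 0"
      "0 < \<mu>min" "\<mu>min \<le> \<mu>max" "0 < \<gamma>dec" "\<gamma>dec < 1" "\<gamma>inc > 1"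
    and mu0: "\<mu>min \<le> \<mu> 0" "\<mu> 0 \<le> \<mu>max"
    and key: "\<mu>max * \<tau>min > 2 * L / (1 - \<alpha>)"
    and x0: "x 0 \<in> \<Omega>"
    and H_sym: "\<forall>k. transpose (H k) = H k"
    and H_psd: "\<forall>k. \<forall>v. 0 \<le> v \<bullet> (H k *v v)"
    and H_bnd: "\<forall>k. onorm (\<lambda>v. H k *v v) \<le> C"
    and step_half: "\<forall>k. \<forall>y.
        ereal (osmm_l M f gradf x k (xh k) + osmm_quad (H k) (\<mu> k * (osmm_tau (H k) + \<tau>min)) (xh k - x k)) + g (xh k)
        \<le> ereal (osmm_l M f gradf x k y + osmm_quad (H k) (\<mu> k * (osmm_tau (H k) + \<tau>min)) (y - x k)) + g y"
    and step_t: "\<forall>k. t k = \<beta> ^ j k"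
    and step_ls: "\<forall>k. \<forall>i \<le> j k.
        (ext_inf \<Omega> f (x k + (\<beta> ^ i) *\<^sub>R (xh k - x k)) + ereal (\<beta> ^ i) * g (xh k)
           + ereal (1 - \<beta> ^ i) * g (x k)
         \<le> h (x k) - ereal (\<alpha> * \<beta> ^ i * osmm_quad (H k) (\<mu> k * (osmm_tau (H k) + \<tau>min)) (xh k - x k)))
        \<longleftrightarrow> i = j k"
    and step_x: "\<forall>k. x (Suc k) = x k + t k *\<^sub>R (xh k - x k)"
    and step_mu: "\<forall>k. \<mu> (Suc k) = (if t k = 1 then max (\<gamma>dec * \<mu> k) \<mu>min else min (\<gamma>inc * \<mu> k) \<mu>max)"
  shows "\<forall>k0. \<exists>k\<ge>k0. t k = 1"
  proof -
  note hc = h_compact[unfolded h_def]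
  obtain y0 where y0: "y0 \<in> \<Omega>" "g y0 \<noteq> \<infinity>"
  proof -
    obtain y where hy: "h y < \<infinity>" using h_finite[unfolded INF_less_iff] by blast
    have "y \<in> \<Omega>"
    proof (rule ccontr)
      assume "y \<notin> \<Omega>"
      then have "h y = \<infinity>" using g_proper by (simp add: h_def ext_inf_def)
      then show False using hy by simp
    qed
    moreover have "g y \<noteq> \<infinity>"
    proof
      assume "g y = \<infinity>"
      then have "h y = \<infinity>" using \<open>y \<in> \<Omega>\<close> by (simp add: h_def ext_inf_def)
      then show False using hy by simp
    qed
    ultimately show ?thesis using that by blast
  qed
  have domg: "w \<in> \<Omega>" if "g w \<noteq> \<infinity>" for w
    using dom_sub[OF \<Omega> f_convex f_grad f_lip g_proper g_convex hc y0 that] .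
  have gxh: "g (xh k) \<noteq> \<infinity>" for k
  proof
    assume "g (xh k) = \<infinity>"
    moreover have "ereal (osmm_l M f gradf x k (xh k) + osmm_quad (H k) (\<mu> k * (osmm_tau (H k) + \<tau>min)) (xh k - x k)) + g (xh k)
        \<le> ereal (osmm_l M f gradf x k y0 + osmm_quad (H k) (\<mu> k * (osmm_tau (H k) + \<tau>min)) (y0 - x k)) + g y0"
      using step_half by blast
    ultimately show False using y0(2) g_proper by (cases "g y0") auto
  qed
  have xhO: "xh k \<in> \<Omega>" for k using domg[OF gxh] .
  have tpos: "0 < t k" "t k \<le> 1" for k
    using step_t params by (auto simp: power_le_one)
  have xO: "x k \<in> \<Omega>" for k
  proof (induction k)
    case 0 then show ?case using x0 .
  next
    case (Suc k)
    have "x (Suc k) = (1 - t k) *\<^sub>R x k + t k *\<^sub>R xh k"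
      using step_x by (simp add: algebra_simps)
    then show ?case using convexD_alt[OF \<Omega>(2) Suc xhO, of "t k"] tpos[of k] by simp
  qed
  have mub: "\<mu>min \<le> \<mu> k \<and> \<mu> k \<le> \<mu>max" for k
  proof (induction k)
    case 0 then show ?case using mu0 by simp
  next
    case (Suc k)
    have a: "\<gamma>dec * \<mu> k \<le> \<mu>max"
      using Suc params by (smt (verit) mult_left_le_one_le)
    have b: "\<mu>min \<le> \<gamma>inc * \<mu> k"
      using Suc params by (smt (verit) mult_le_cancel_right1)
    show ?case using step_mu[rule_format, of k] a b Suc params by auto
  qed
  have key1: "t k = 1" if mk: "\<mu> k = \<mu>max" for k
  proof -
    define lam where "lam = \<mu> k * (osmm_tau (H k) + \<tau>min)"
    define v where "v = xh k - x k"
    define Q where "Q = osmm_quad (H k) lam v"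
    have mpos: "0 < \<mu>max" using params by simp
    have "0 \<le> osmm_tau (H k)" using tau_nonneg H_psd by blast
    then have lam_ge: "\<mu>max * \<tau>min \<le> lam" unfolding lam_def mk using mpos
      by (simp add: mult_left_mono)
    have Qlb: "lam / 2 * (norm v)^2 \<le> Q" unfolding Q_def using quad_lb H_psd by blast
    have "2 * L / (1 - \<alpha>) < lam" using key lam_ge by linarith
    then have lamL: "L \<le> (1 - \<alpha>) * (lam / 2)" using params by (simp add: pos_divide_less_eq mult.commute)
    have "L * (norm v)^2 \<le> (1 - \<alpha>) * (lam / 2) * (norm v)^2"
      using mult_right_mono[OF lamL, of "(norm v)^2"] by simp
    also have "\<dots> \<le> (1 - \<alpha>) * Q"
      using Qlb params mult_left_mono[OF Qlb, of "1 - \<alpha>"] by simp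
    finally have LQ: "L * (norm v)^2 \<le> (1 - \<alpha>) * Q" .
    define I where "I = {(k + 1) - M .. k}"
    have I: "finite I" "k \<in> I" using params by (auto simp: I_def)
    have l_x: "osmm_l M f gradf x k (x k) \<le> f (x k)"
      unfolding osmm_l_def I_def[symmetric] using I
    proof (subst Max_le_iff)
      show "finite ((\<lambda>i. f (x i) + gradf (x i) \<bullet> (x k - x i)) ` I)" using I by simp
      show "(\<lambda>i. f (x i) + gradf (x i) \<bullet> (x k - x i)) ` I \<noteq> {}" using I by blast
      show "\<forall>a\<in>(\<lambda>i. f (x i) + gradf (x i) \<bullet> (x k - x i)) ` I. a \<le> f (x k)"
        using grad_ineq[OF \<Omega> f_convex xO xO] f_grad xO by blast
    qed
    have l_xh: "f (x k) + gradf (x k) \<bullet> v \<le> osmm_l M f gradf x k (xh k)"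
      unfolding osmm_l_def I_def[symmetric] v_def using I by (auto intro!: Max_ge)
    have fxh: "f (xh k) \<le> f (x k) + gradf (x k) \<bullet> v + L * (norm v)^2"
      unfolding v_def using fbound[OF \<Omega> f_convex xO xhO f_grad f_lip] .
    have sh: "ereal (osmm_l M f gradf x k (xh k) + Q) + g (xh k) \<le> ereal (osmm_l M f gradf x k (x k)) + g (x k)"
      using step_half[rule_format, of k "x k"] by (simp add: Q_def lam_def v_def quad0)
    obtain Gh where Gh: "g (xh k) = ereal Gh" using gxh g_proper by (cases "g (xh k)") auto
    have cond: "ext_inf \<Omega> f (x k + (\<beta> ^ 0) *\<^sub>R (xh k - x k)) + ereal (\<beta> ^ 0) * g (xh k)
           + ereal (1 - \<beta> ^ 0) * g (x k)
         \<le> h (x k) - ereal (\<alpha> * \<beta> ^ 0 * Q)"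
    proof (cases "g (x k)")
      case (real Gx)
      have r: "osmm_l M f gradf x k (xh k) + Q + Gh \<le> osmm_l M f gradf x k (x k) + Gx"
        using sh by (simp add: Gh real)
      have "f (xh k) + Gh \<le> f (x k) + Gx - \<alpha> * Q" using r l_x l_xh fxh LQ by (simp add: left_diff_distrib)
      then show ?thesis using xO xhO by (simp add: h_def ext_inf_def Gh real)
    next
      case PInf
      then show ?thesis using xO by (simp add: h_def ext_inf_def)
    next
      case MInf
      then show ?thesis using g_proper by simp
    qed
    have "j k = 0"
      using step_ls[THEN spec[of _ k], THEN spec[of _ 0]] cond unfolding Q_def lam_def v_def by simp
    then show ?thesis using step_t by simp
  qed
  show ?thesis
  proof (rule ccontr)
    assume "\<not> ?thesis"
    then obtain k0 where nk: "\<forall>k\<ge>k0. t k \<noteq> 1" by auto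
    have grow: "\<mu> (k0 + m) = \<mu>max \<or> \<gamma>inc ^ m * \<mu>min \<le> \<mu> (k0 + m)" for m
    proof (induction m)
      case 0 then show ?case using mub by simp
    next
      case (Suc m)
      have e: "\<mu> (k0 + Suc m) = min (\<gamma>inc * \<mu> (k0 + m)) \<mu>max"
        using step_mu[rule_format, of "k0 + m"] nk by simp
      show ?case
      proof (cases "\<mu> (k0 + m) = \<mu>max")
        case True
        then show ?thesis using e params by simp
      next
        case False
        then have "\<gamma>inc ^ m * \<mu>min \<le> \<mu> (k0 + m)" using Suc by simp
        then have "\<gamma>inc ^ Suc m * \<mu>min \<le> \<gamma>inc * \<mu> (k0 + m)"
          using params by (simp add: mult.assoc)
        then show ?thesis using e by linarith
      qed
    qed
    obtain m where m: "\<mu>max / \<mu>min < \<gamma>inc ^ m" using real_arch_pow params by blast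
    then have "\<mu>max < \<gamma>inc ^ m * \<mu>min" using params by (simp add: pos_divide_less_eq)
    then have "\<mu> (k0 + m) = \<mu>max" using grow[of m] mub[of "k0 + m"] by linarith
    then have "t (k0 + m) = 1" by (rule key1)
    then show False using nk by simp
  qed
qed

end
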